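(* Let $\mathcal S\subset\mathbb Z^2$ be a finite step set with weights $(\omega_s)_{s\in\mathcal S}$, let $t_c>0$, and let $\rho>0$ be irrational. Let $q:\mathbb N^2\times\mathbb N\to\mathbb C$, $(x,n)\mapsto q(x;n)$, extended by $q(y;n)=0$ for $y\notin\mathbb N^2$, satisfy $$q(x;n+1)=\sum_{s\in\mathcal S}\omega_s\,q(x-s;n)\qquad\text{for all }x\in\mathbb N^2,\ n\ge0,$$ and suppose there are functions $v_{k,\ell,m}:\mathbb N^2\to\mathbb C$ (integers $k\ge1$, $\ell\ge m\ge0$) such that for every $p>0$ and every $x\in\mathbb N^2$, $$q(x;n)=t_c^{-n}\sum_{\substack{k\ge1,\ \ell\ge m\ge0\\ k\rho+\ell+1<p}}v_{k,\ell,m}(x)\frac{(\log n)^m}{n^{k\rho+\ell+1}}+\mathcal O\!\left(t_c^{-n}\left(\frac{\log n}{n}\right)^p\right)\quad(n\to\infty).$$ Then each $v_{k,\ell,m}$ is $t_c$-polyharmonic of order $\ell-m+1$, i.e. $\Delta^{\ell-m+1}v_{k,\ell,m}\equiv0$ on $\mathbb N^2$.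
   Context: $\Delta$ acts on functions $w:\mathbb N^2\to\mathbb C$ by $(\Delta w)(A)=\sum_{s\in\mathcal S}\omega_s\,w(A-s)-t_c^{-1}w(A)$ for $A\in\mathbb N^2$, with the convention $w(B)=0$ for $B\notin\mathbb N^2$; $\Delta^r$ is the $r$-fold iterate of this operator. *)

theory Defs
  imports "HOL-Analysis.Analysis" "HOL-Library.Landau_Symbols"
begin

definition zext :: "(nat \<times> nat \<Rightarrow> 'a::zero) \<Rightarrow> int \<times> int \<Rightarrow> 'a" where
  "zext w y = (if fst y \<ge> 0 \<and> snd y \<ge> 0 then w (nat (fst y), nat (snd y)) else 0)"

definition Delta :: "(int \<times> int) set \<Rightarrow> (int \<times> int \<Rightarrow> real) \<Rightarrow> real
    \<Rightarrow> (nat \<times> nat \<Rightarrow> complex) \<Rightarrow> nat \<times> nat \<Rightarrow> complex" where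
  "Delta S \<omega> tc w A =
     (\<Sum>s\<in>S. complex_of_real (\<omega> s) * zext w (int (fst A) - fst s, int (snd A) - snd s))
     - complex_of_real (1 / tc) * w A"

end

theory Submission
  imports Defs "HOL-Real_Asymp.Real_Asymp"
begin

definition Gf :: "real \<Rightarrow> nat \<Rightarrow> real" where
  "Gf p n = (ln (real n) / real n) powr p"

definition negl :: "real \<Rightarrow> (nat \<Rightarrow> complex) \<Rightarrow> bool" where
  "negl p h \<longleftrightarrow> (\<exists>C. eventually (\<lambda>n. norm (h n) \<le> C * Gf p n) at_top)"

lemma Gf_nonneg: "Gf p n \<ge> 0" unfolding Gf_def by simp

lemma negl_bigo:
  assumes "(\<lambda>n. norm (h n)) \<in> O(\<lambda>n. (ln (real n) / real n) powr p)"
  shows "negl p h"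
proof -
  from assms obtain c where "eventually (\<lambda>n. norm (norm (h n)) \<le> c * norm ((ln (real n) / real n) powr p)) at_top"
    by (elim landau_o.bigE) auto
  then show ?thesis unfolding negl_def Gf_def by (intro exI[of _ c]) (auto elim!: eventually_mono)
qed

lemma negl_real_bigo:
  assumes "(f :: nat \<Rightarrow> real) \<in> O(\<lambda>n. (ln (real n) / real n) powr p)"
  shows "negl p (\<lambda>n. of_real (f n))"
proof -
  from assms obtain c where "eventually (\<lambda>n. norm (f n) \<le> c * norm ((ln (real n) / real n) powr p)) at_top"
    by (elim landau_o.bigE) auto
  then show ?thesis unfolding negl_def Gf_def by (intro exI[of _ c]) (auto elim!: eventually_mono)
qed

lemma negl_zero: "negl p (\<lambda>n. 0)"
  unfolding negl_def by (intro exI[of _ 0]) simp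

lemma negl_add:
  assumes "negl p f" "negl p g"
  shows "negl p (\<lambda>n. f n + g n)"
proof -
  from assms obtain C1 C2 where "eventually (\<lambda>n. norm (f n) \<le> C1 * Gf p n) at_top"
    "eventually (\<lambda>n. norm (g n) \<le> C2 * Gf p n) at_top" unfolding negl_def by blast
  then have "eventually (\<lambda>n. norm (f n + g n) \<le> (C1 + C2) * Gf p n) at_top"
    by eventually_elim (auto simp: algebra_simps intro: order.trans[OF norm_triangle_ineq])
  then show ?thesis unfolding negl_def by blast
qed

lemma negl_cmult:
  assumes "negl p f"
  shows "negl p (\<lambda>n. c * f n)"
proof -
  from assms obtain C where "eventually (\<lambda>n. norm (f n) \<le> C * Gf p n) at_top"
    unfolding negl_def by blast
  then have "eventually (\<lambda>n. norm (c * f n) \<le> (norm c * C) * Gf p n) at_top"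
    by eventually_elim (auto simp: norm_mult mult.assoc intro: mult_left_mono)
  then show ?thesis unfolding negl_def by blast
qed

lemma negl_uminus: "negl p f \<Longrightarrow> negl p (\<lambda>n. - f n)"
  using negl_cmult[of p f "-1"] by simp

lemma negl_diff: "negl p f \<Longrightarrow> negl p g \<Longrightarrow> negl p (\<lambda>n. f n - g n)"
  using negl_add[of p f "\<lambda>n. - g n"] negl_uminus[of p g] by simp

lemma negl_sum:
  assumes "finite A" "\<And>a. a \<in> A \<Longrightarrow> negl p (h a)"
  shows "negl p (\<lambda>n. \<Sum>a\<in>A. h a n)"
  using assms by (induction A rule: finite_induct) (auto intro: negl_zero negl_add)

lemma negl_cong:
  assumes "negl p f" "eventually (\<lambda>n. f n = g n) at_top"
  shows "negl p g"
proof -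
  from assms obtain C where "eventually (\<lambda>n. norm (f n) \<le> C * Gf p n) at_top"
    unfolding negl_def by blast
  with assms(2) have "eventually (\<lambda>n. norm (g n) \<le> C * Gf p n) at_top"
    by eventually_elim auto
  then show ?thesis unfolding negl_def by blast
qed

lemma negl_Suc:
  assumes p: "p > 0" and "negl p f"
  shows "negl p (\<lambda>n. f (Suc n))"
proof -
  from assms obtain C where C: "eventually (\<lambda>n. norm (f n) \<le> C * Gf p n) at_top"
    unfolding negl_def by blast
  have "(\<lambda>n::nat. (ln (real (Suc n)) / real (Suc n)) powr p) \<in> O(\<lambda>n. (ln (real n) / real n) powr p)"
    using p by real_asymp
  then obtain K where K: "eventually (\<lambda>n. norm ((ln (real (Suc n)) / real (Suc n)) powr p) \<le> K * norm ((ln (real n) / real n) powr p)) at_top"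
    by (elim landau_o.bigE) auto
  from C have C': "eventually (\<lambda>n. norm (f (Suc n)) \<le> C * Gf p (Suc n)) at_top"
    by (rule eventually_sequentially_Suc[THEN iffD2])
  from C' K have "eventually (\<lambda>n. norm (f (Suc n)) \<le> (\<bar>C\<bar> * K) * Gf p n) at_top"
  proof eventually_elim
    case (elim n)
    have "norm (f (Suc n)) \<le> C * Gf p (Suc n)" by fact
    also have "\<dots> \<le> \<bar>C\<bar> * Gf p (Suc n)" using Gf_nonneg[of p "Suc n"] by (intro mult_right_mono) auto
    also have "\<dots> \<le> \<bar>C\<bar> * (K * Gf p n)" using elim(2) unfolding Gf_def by (intro mult_left_mono) auto
    finally show ?case by (simp add: mult.assoc)
  qed
  then show ?thesis unfolding negl_def by blast
qed


section \<open>Linearity of Delta\<close>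

lemma zext_lin:
  fixes c :: "'u \<Rightarrow> 'a::comm_ring_1"
  shows "zext (\<lambda>y. \<Sum>u\<in>U. c u * g u y) A = (\<Sum>u\<in>U. c u * zext (g u) A)"
  unfolding zext_def by (cases "0 \<le> fst A \<and> 0 \<le> snd A") auto

lemma Delta_lin:
  "Delta S \<omega> tc (\<lambda>y. \<Sum>u\<in>U. c u * g u y) = (\<lambda>A. \<Sum>u\<in>U. c u * Delta S \<omega> tc (g u) A)"
proof
  fix A
  show "Delta S \<omega> tc (\<lambda>y. \<Sum>u\<in>U. c u * g u y) A = (\<Sum>u\<in>U. c u * Delta S \<omega> tc (g u) A)"
    unfolding Delta_def zext_lin
    by (simp add: sum_distrib_left sum_subtractf algebra_simps sum.swap[of _ S U])
qed

lemma Deltapow_lin: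
  "(Delta S \<omega> tc ^^ d) (\<lambda>y. \<Sum>u\<in>U. c u * g u y) = (\<lambda>A. \<Sum>u\<in>U. c u * (Delta S \<omega> tc ^^ d) (g u) A)"
proof (induction d)
  case 0
  then show ?case by simp
next
  case (Suc d)
  show ?case by (simp add: Suc Delta_lin)
qed

lemma Deltapow_zero: "(Delta S \<omega> tc ^^ d) (\<lambda>_. 0) = (\<lambda>_. 0)"
  using Deltapow_lin[where U="{}" and S=S and \<omega>=\<omega> and tc=tc and d=d] by simp

lemma iterate_Delta:
  assumes H: "\<And>l m. m \<le> l \<Longrightarrow> \<exists>(U::'u set) c L M. finite U \<and> (\<forall>u\<in>U. M u \<le> L u \<and> L u - M u < l - m)
      \<and> Delta S \<omega> tc (v l m) = (\<lambda>x. \<Sum>u\<in>U. c u * v (L u) (M u) x)"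
  shows "m \<le> l \<Longrightarrow> (Delta S \<omega> tc ^^ (l - m + 1)) (v l m) = (\<lambda>_. 0)"
proof (induction "l - m" arbitrary: l m rule: less_induct)
  case less
  from H[OF less.prems] obtain U c L M where U: "finite (U::'u set)"
    and UL: "\<forall>u\<in>U. M u \<le> L u \<and> L u - M u < l - m"
    and D: "Delta S \<omega> tc (v l m) = (\<lambda>x. \<Sum>u\<in>U. c u * v (L u) (M u) x)" by blast
  have "(Delta S \<omega> tc ^^ (l - m + 1)) (v l m) = (Delta S \<omega> tc ^^ (l - m)) (Delta S \<omega> tc (v l m))"
    by (simp add: funpow_Suc_right del: funpow.simps)
  also have "\<dots> = (\<lambda>A. \<Sum>u\<in>U. c u * (Delta S \<omega> tc ^^ (l - m)) (v (L u) (M u)) A)"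
    unfolding D Deltapow_lin ..
  also have "\<dots> = (\<lambda>_. 0)"
  proof (intro ext sum.neutral ballI)
    fix A u assume u: "u \<in> U"
    from u UL have lt: "L u - M u < l - m" and le: "M u \<le> L u" by auto
    have IH: "(Delta S \<omega> tc ^^ (L u - M u + 1)) (v (L u) (M u)) = (\<lambda>_. 0)"
      using less.hyps[OF lt le] .
    have "l - m = (l - m - (L u - M u + 1)) + (L u - M u + 1)" using lt by simp
    then have "(Delta S \<omega> tc ^^ (l - m)) (v (L u) (M u))
       = (Delta S \<omega> tc ^^ (l - m - (L u - M u + 1))) ((Delta S \<omega> tc ^^ (L u - M u + 1)) (v (L u) (M u)))"
      by (metis comp_apply funpow_add)
    also have "\<dots> = (\<lambda>_. 0)" unfolding IH Deltapow_zero ..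
    finally show "c u * (Delta S \<omega> tc ^^ (l - m)) (v (L u) (M u)) A = 0" by simp
  qed
  finally show ?case .
qed


section \<open>Uniqueness of expansions\<close>

definition Ff :: "real \<Rightarrow> nat \<Rightarrow> nat \<Rightarrow> real" where
  "Ff b j n = ln (real n) ^ j / real n powr b"

lemma uniq_lim1:
  assumes "bs < b"
  shows "((\<lambda>n::nat. real n powr bs / ln (real n) ^ js * (ln (real n) ^ j / real n powr b)) \<longlongrightarrow> 0) at_top"
  using assms by real_asymp

lemma uniq_lim2:
  assumes "j < js"
  shows "((\<lambda>n::nat. real n powr bs / ln (real n) ^ js * (ln (real n) ^ j / real n powr bs)) \<longlongrightarrow> 0) at_top"
  using assms by real_asymp

lemma uniq_lim3:
  assumes "bs < p"
  shows "((\<lambda>n::nat. real n powr bs / ln (real n) ^ js * (ln (real n) / real n) powr p) \<longlongrightarrow> 0) at_top"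
  using assms by real_asymp

lemma uniq_core:
  fixes Z :: "(real \<times> nat) set" and C :: "real \<times> nat \<Rightarrow> complex"
  assumes fin: "finite Z" and nz: "\<And>g. g \<in> Z \<Longrightarrow> C g \<noteq> 0"
    and neg: "negl p (\<lambda>n. \<Sum>g\<in>Z. C g * of_real (Ff (fst g) (snd g) n))"
    and g0: "g0 \<in> Z" and b0: "fst g0 < p"
  shows False
proof -
  define bs where "bs = Min (fst ` Z)"
  have bsZ: "bs \<in> fst ` Z" unfolding bs_def using fin g0 by (intro Min_in) auto
  have bs_le: "g \<in> Z \<Longrightarrow> bs \<le> fst g" for g unfolding bs_def using fin by (intro Min_le) auto
  have bsp: "bs < p" using bs_le[OF g0] b0 by simp
  define Js where "Js = snd ` {g\<in>Z. fst g = bs}"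
  define js where "js = Max Js"
  have "js \<in> Js" unfolding js_def Js_def using fin bsZ by (intro Max_in) auto
  then have gs: "(bs, js) \<in> Z" unfolding Js_def by auto
  have js_ge: "g \<in> Z \<Longrightarrow> fst g = bs \<Longrightarrow> snd g \<le> js" for g
    unfolding js_def Js_def using fin by (intro Max_ge) auto
  define w where "w n = real n powr bs / ln (real n) ^ js" for n :: nat
  define h where "h n = (\<Sum>g\<in>Z. C g * of_real (Ff (fst g) (snd g) n))" for n
  have "((\<lambda>n. \<Sum>g\<in>Z. C g * of_real (w n * Ff (fst g) (snd g) n)) \<longlongrightarrow>
         (\<Sum>g\<in>Z. C g * of_real (if g = (bs, js) then 1 else 0))) at_top"
  proof (intro tendsto_intros)
    fix g assume gZ: "g \<in> Z"
    show "((\<lambda>n. w n * Ff (fst g) (snd g) n) \<longlongrightarrow> (if g = (bs, js) then 1 else 0)) at_top"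
    proof (cases "g = (bs, js)")
      case True
      have "eventually (\<lambda>n. w n * Ff (fst g) (snd g) n = 1) at_top"
        using eventually_ge_at_top[of 2]
      proof eventually_elim
        case (elim n)
        then have "ln (real n) > 0" by simp
        moreover have "real n powr bs > 0" using elim by simp
        ultimately show ?case unfolding w_def Ff_def True by simp
      qed
      then show ?thesis using True by (simp add: tendsto_eventually)
    next
      case False
      from bs_le[OF gZ] have "bs < fst g \<or> (fst g = bs \<and> snd g < js)"
        using js_ge[OF gZ] False by (cases g) force
      then have "((\<lambda>n. w n * Ff (fst g) (snd g) n) \<longlongrightarrow> 0) at_top"
      proof
        assume "bs < fst g"
        then show ?thesis unfolding w_def Ff_def by (rule uniq_lim1)
      next
        assume "fst g = bs \<and> snd g < js"
        then show ?thesis unfolding w_def Ff_def using uniq_lim2[of "snd g" js bs] by simp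
      qed
      then show ?thesis using False by simp
    qed
  qed
  also have "(\<Sum>g\<in>Z. C g * of_real (if g = (bs, js) then 1 else 0)) = C (bs, js)"
    using fin gs by (simp add: sum.delta' if_distrib cong: if_cong)
  finally have L1: "((\<lambda>n. of_real (w n) * h n) \<longlongrightarrow> C (bs, js)) at_top"
    unfolding h_def by (simp add: sum_distrib_left mult_ac)
  from neg obtain K where K: "eventually (\<lambda>n. norm (h n) \<le> K * Gf p n) at_top"
    unfolding negl_def h_def by blast
  have "((\<lambda>n. of_real (w n) * h n) \<longlongrightarrow> 0) at_top"
  proof (rule Lim_null_comparison)
    show "eventually (\<lambda>n. norm (of_real (w n) * h n) \<le> \<bar>K\<bar> * (w n * Gf p n)) at_top"
      using K eventually_ge_at_top[of 2]
    proof eventually_elim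
      case (elim n)
      then have w0: "w n \<ge> 0" unfolding w_def by simp
      have "norm (of_real (w n) * h n) = w n * norm (h n)" using w0 by (simp add: norm_mult)
      also have "\<dots> \<le> w n * (K * Gf p n)" using elim w0 by (intro mult_left_mono) auto
      also have "\<dots> \<le> w n * (\<bar>K\<bar> * Gf p n)" using w0 Gf_nonneg[of p n]
        by (intro mult_left_mono mult_right_mono) auto
      finally show ?case by (simp add: mult_ac)
    qed
    show "((\<lambda>n. \<bar>K\<bar> * (w n * Gf p n)) \<longlongrightarrow> 0) at_top"
      unfolding w_def Gf_def by (intro tendsto_mult_right_zero uniq_lim3 bsp)
  qed
  with L1 have "C (bs, js) = 0" using LIMSEQ_unique by blast
  with nz[OF gs] show False by simp
qed

lemma uniq:
  fixes T :: "'u set" and c :: "'u \<Rightarrow> complex" and b :: "'u \<Rightarrow> real" and j :: "'u \<Rightarrow> nat"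
  assumes fin: "finite T" and neg: "negl p (\<lambda>n. \<Sum>u\<in>T. c u * of_real (Ff (b u) (j u) n))"
    and b0: "b0 < p"
  shows "(\<Sum>u\<in>{u\<in>T. b u = b0 \<and> j u = j0}. c u) = 0"
proof (rule ccontr)
  define Gs where "Gs = (\<lambda>u. (b u, j u)) ` T"
  define C where "C g = (\<Sum>u\<in>{u\<in>T. (b u, j u) = g}. c u)" for g
  define Z where "Z = {g\<in>Gs. C g \<noteq> 0}"
  have finG: "finite Gs" unfolding Gs_def using fin by simp
  have finZ: "finite Z" unfolding Z_def using finG by simp
  have "(\<Sum>u\<in>T. c u * of_real (Ff (b u) (j u) n)) = (\<Sum>g\<in>Gs. C g * of_real (Ff (fst g) (snd g) n))" for n
  proof -
    have "(\<Sum>u\<in>T. c u * of_real (Ff (b u) (j u) n)) =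
        (\<Sum>g\<in>Gs. \<Sum>u\<in>{u\<in>T. (b u, j u) = g}. c u * of_real (Ff (b u) (j u) n))"
      using sum.group[OF fin finG, where g="\<lambda>u. (b u, j u)" and h="\<lambda>u. c u * of_real (Ff (b u) (j u) n)"]
      unfolding Gs_def by simp
    also have "\<dots> = (\<Sum>g\<in>Gs. C g * of_real (Ff (fst g) (snd g) n))"
      unfolding C_def sum_distrib_right by (intro sum.cong refl) auto
    finally show ?thesis .
  qed
  also have "(\<Sum>g\<in>Gs. C g * of_real (Ff (fst g) (snd g) n)) = (\<Sum>g\<in>Z. C g * of_real (Ff (fst g) (snd g) n))" for n
    unfolding Z_def using finG by (intro sum.mono_neutral_right) auto
  finally have neg': "negl p (\<lambda>n. \<Sum>g\<in>Z. C g * of_real (Ff (fst g) (snd g) n))"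
    using neg by simp
  assume ne: "(\<Sum>u\<in>{u\<in>T. b u = b0 \<and> j u = j0}. c u) \<noteq> 0"
  then have Cne: "C (b0, j0) \<noteq> 0" unfolding C_def by simp
  have "{u\<in>T. (b u, j u) = (b0, j0)} \<noteq> {}"
  proof
    assume "{u\<in>T. (b u, j u) = (b0, j0)} = {}"
    then have "C (b0, j0) = 0" unfolding C_def by (simp only: sum.empty)
    with Cne show False by simp
  qed
  then have "(b0, j0) \<in> Gs" unfolding Gs_def by force
  with Cne have "(b0, j0) \<in> Z" unfolding Z_def by simp
  from uniq_core[OF finZ _ neg' this] b0 show False unfolding Z_def by auto
qed

lemma uniq2:
  fixes A :: "'u set" and B :: "'w set"
  assumes finA: "finite A" and finB: "finite B"
    and neg: "negl p (\<lambda>n. (\<Sum>u\<in>A. c1 u * of_real (Ff (b1 u) (j1 u) n)) + (\<Sum>u\<in>B. c2 u * of_real (Ff (b2 u) (j2 u) n)))"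
    and b0: "b0 < p"
  shows "(\<Sum>u\<in>{u\<in>A. b1 u = b0 \<and> j1 u = j0}. c1 u) + (\<Sum>u\<in>{u\<in>B. b2 u = b0 \<and> j2 u = j0}. c2 u) = 0"
proof -
  define c where "c = case_sum c1 c2"
  define b where "b = case_sum b1 b2"
  define j where "j = case_sum j1 j2"
  have "negl p (\<lambda>n. \<Sum>u\<in>A <+> B. c u * of_real (Ff (b u) (j u) n))"
    using neg unfolding c_def b_def j_def by (simp add: sum.Plus[OF finA finB] comp_def)
  from uniq[OF _ this b0, of j0] finA finB
  have "(\<Sum>u\<in>{u\<in>A <+> B. b u = b0 \<and> j u = j0}. c u) = 0" by simp
  moreover have "{u\<in>A <+> B. b u = b0 \<and> j u = j0} = {u\<in>A. b1 u = b0 \<and> j1 u = j0} <+> {u\<in>B. b2 u = b0 \<and> j2 u = j0}"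
    unfolding b_def j_def by auto
  ultimately show ?thesis using finA finB unfolding c_def by (simp add: sum.Plus comp_def)
qed


section \<open>Taylor expansion of the shift\<close>

fun Ec :: "real \<Rightarrow> nat \<Rightarrow> nat \<Rightarrow> nat \<Rightarrow> real" where
  "Ec a m 0 j = (if j = m then 1 else 0)"
| "Ec a m (Suc i) j = (if j < m then real (Suc j) * Ec a m i (Suc j) else 0) - (a + real i) * Ec a m i j"

definition phi :: "real \<Rightarrow> nat \<Rightarrow> nat \<Rightarrow> real \<Rightarrow> real" where
  "phi a m i t = (\<Sum>j\<le>m. Ec a m i j * (ln t ^ j * t powr (-(a + real i))))"

lemma deriv_term:
  assumes t: "t > 0"
  shows "((\<lambda>t. ln t ^ j * t powr (-c)) has_real_derivative
           ((real j * ln t ^ (j - 1) - c * ln t ^ j) * t powr (-(c + 1)))) (at t)"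
proof -
  have e0: "t powr (-c - 1) = t powr (-c) / t powr 1" by (rule powr_diff)
  have "-(c + 1) = -c - 1" by simp
  then have e: "t powr (-(c + 1)) = t powr (-c) / t"
    using e0 t by simp
  have e1: "t powr (-c - 1) = t powr (-c) / t" using e0 t by simp
  have "((\<lambda>t. ln t ^ j * t powr (-c)) has_real_derivative
           (real j * ln t ^ (j - 1) * (1 / t) * t powr (-c) + ln t ^ j * (-c * t powr (-c - 1)))) (at t)"
  proof -
    have d1: "(ln has_real_derivative 1 / t) (at t)" using t by (rule DERIV_ln_divide)
    have d2: "((\<lambda>t. ln t ^ j) has_real_derivative real j * ln t ^ (j - 1) * (1 / t)) (at t)"
      using DERIV_power[OF d1, of j] by simp
    have d3: "((\<lambda>t. t powr (-c)) has_real_derivative (-c) * t powr (-c - 1)) (at t)"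
      using has_real_derivative_powr[OF t, of "-c"] by simp
    show ?thesis using DERIV_mult[OF d2 d3] by (simp add: mult_ac)
  qed
  also have "(real j * ln t ^ (j - 1) * (1 / t) * t powr (-c) + ln t ^ j * (-c * t powr (-c - 1)))
      = ((real j * ln t ^ (j - 1) - c * ln t ^ j) * t powr (-(c + 1)))"
    unfolding e e1 by (simp add: algebra_simps)
  finally show ?thesis .
qed

lemma shift_sum:
  fixes e :: "nat \<Rightarrow> real"
  shows "(\<Sum>j\<le>m. e j * (real j * L ^ (j - 1))) = (\<Sum>j\<le>m. (if j < m then real (Suc j) * e (Suc j) else 0) * L ^ j)"
proof (cases m)
  case 0
  then show ?thesis by simp
next
  case (Suc k)
  have "(\<Sum>j\<le>Suc k. e j * (real j * L ^ (j - 1))) = (\<Sum>j\<le>k. e (Suc j) * (real (Suc j) * L ^ j))"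
    by (subst sum.atMost_Suc_shift) simp
  also have "\<dots> = (\<Sum>j\<le>Suc k. (if j < Suc k then real (Suc j) * e (Suc j) else 0) * L ^ j)"
    by (subst sum.atMost_Suc) (simp add: mult_ac)
  finally show ?thesis using Suc by simp
qed

lemma deriv_phi:
  assumes t: "t > 0"
  shows "(phi a m i has_real_derivative phi a m (Suc i) t) (at t)"
proof -
  have "(phi a m i has_real_derivative
     (\<Sum>j\<le>m. Ec a m i j * ((real j * ln t ^ (j - 1) - (a + real i) * ln t ^ j) * t powr (-((a + real i) + 1))))) (at t)"
    unfolding phi_def by (intro DERIV_sum DERIV_cmult deriv_term t)
  also have "(\<Sum>j\<le>m. Ec a m i j * ((real j * ln t ^ (j - 1) - (a + real i) * ln t ^ j) * t powr (-((a + real i) + 1))))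
     = (\<Sum>j\<le>m. Ec a m i j * (real j * ln t ^ (j - 1)) * t powr (-((a + real i) + 1))
       - (a + real i) * Ec a m i j * ln t ^ j * t powr (-((a + real i) + 1)))"
    by (intro sum.cong refl) (simp add: algebra_simps)
  also have "\<dots> = (\<Sum>j\<le>m. Ec a m i j * (real j * ln t ^ (j - 1))) * t powr (-((a + real i) + 1))
       - (\<Sum>j\<le>m. (a + real i) * Ec a m i j * ln t ^ j) * t powr (-((a + real i) + 1))"
    by (simp add: sum_subtractf sum_distrib_right)
  also have "\<dots> = (\<Sum>j\<le>m. (if j < m then real (Suc j) * Ec a m i (Suc j) else 0) * ln t ^ j) * t powr (-((a + real i) + 1))
       - (\<Sum>j\<le>m. (a + real i) * Ec a m i j * ln t ^ j) * t powr (-((a + real i) + 1))"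
    unfolding shift_sum ..
  also have "\<dots> = (\<Sum>j\<le>m. (if j < m then real (Suc j) * Ec a m i (Suc j) else 0) * ln t ^ j * t powr (-((a + real i) + 1))
       - (a + real i) * Ec a m i j * ln t ^ j * t powr (-((a + real i) + 1)))"
    by (simp add: sum_subtractf sum_distrib_right)
  also have "\<dots> = phi a m (Suc i) t"
  proof -
    have ex: "-(a + real (Suc i)) = -((a + real i) + 1)" by simp
    show ?thesis unfolding phi_def ex Ec.simps
      by (intro sum.cong refl) (simp add: algebra_simps)
  qed
  finally show ?thesis .
qed

lemma phi0: "phi a m 0 t = ln t ^ m / t powr a"
proof -
  have "phi a m 0 t = (\<Sum>j\<le>m. if j = m then ln t ^ j * t powr (-a) else 0)"
    unfolding phi_def by (intro sum.cong refl) simp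
  also have "\<dots> = ln t ^ m * t powr (-a)" by simp
  also have "\<dots> = ln t ^ m / t powr a" by (simp add: powr_minus divide_inverse)
  finally show ?thesis .
qed

lemma phi_Ff: "phi a m i (real n) = (\<Sum>j\<le>m. Ec a m i j * Ff (a + real i) j n)"
proof -
  have e: "real n powr (-(a + real i)) = inverse (real n powr (a + real i))" by (rule powr_minus)
  show ?thesis unfolding phi_def Ff_def e by (simp add: divide_inverse)
qed

lemma taylor_step:
  assumes x: "x \<ge> 1" and N: "N > 0"
  shows "\<exists>\<xi>. x < \<xi> \<and> \<xi> < x + 1 \<and>
    phi a m 0 (x + 1) - phi a m 0 x = (\<Sum>i\<in>{1..<N}. phi a m i x / fact i) + phi a m N \<xi> / fact N"
proof -
  have "\<exists>t. (if x + 1 < x then x + 1 < t \<and> t < x else x < t \<and> t < x + 1) \<and>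
    phi a m 0 (x + 1) = (\<Sum>i<N. phi a m i x / fact i * (x + 1 - x) ^ i) + phi a m N t / fact N * (x + 1 - x) ^ N"
  proof (rule Taylor[of N "phi a m" "phi a m 0" x "x + 1" x "x + 1"])
    show "\<forall>i t. i < N \<and> x \<le> t \<and> t \<le> x + 1 \<longrightarrow> (phi a m i has_real_derivative phi a m (Suc i) t) (at t)"
      using x by (auto intro!: deriv_phi)
  qed (use N in auto)
  then obtain \<xi> where \<xi>: "x < \<xi>" "\<xi> < x + 1"
    and eq: "phi a m 0 (x + 1) = (\<Sum>i<N. phi a m i x / fact i) + phi a m N \<xi> / fact N" by auto
  have "(\<Sum>i<N. phi a m i x / fact i) = phi a m 0 x + (\<Sum>i\<in>{1..<N}. phi a m i x / fact i)"
    using N by (simp add: lessThan_atLeast0 sum.atLeast_Suc_lessThan)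
  with eq \<xi> show ?thesis by auto
qed

lemma phi_bound:
  assumes x: "1 \<le> x" "x \<le> \<xi>" "\<xi> \<le> x + 1" and aN: "a + real N \<ge> 0"
  shows "\<bar>phi a m N \<xi>\<bar> \<le> (\<Sum>j\<le>m. \<bar>Ec a m N j\<bar> * (ln (x + 1) ^ j * x powr (-(a + real N))))"
proof -
  have "\<bar>phi a m N \<xi>\<bar> \<le> (\<Sum>j\<le>m. \<bar>Ec a m N j * (ln \<xi> ^ j * \<xi> powr (-(a + real N)))\<bar>)"
    unfolding phi_def by (rule sum_abs)
  also have "\<dots> \<le> (\<Sum>j\<le>m. \<bar>Ec a m N j\<bar> * (ln (x + 1) ^ j * x powr (-(a + real N))))"
  proof (intro sum_mono)
    fix j
    have l0: "ln \<xi> \<ge> 0" using x by simp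
    have l1: "ln \<xi> \<le> ln (x + 1)" using x by simp
    have p1: "\<xi> powr (-(a + real N)) \<le> x powr (-(a + real N))"
      using x aN by (intro powr_mono2') auto
    have "\<bar>Ec a m N j * (ln \<xi> ^ j * \<xi> powr (-(a + real N)))\<bar> = \<bar>Ec a m N j\<bar> * (ln \<xi> ^ j * \<xi> powr (-(a + real N)))"
      using l0 by (simp add: abs_mult)
    also have "\<dots> \<le> \<bar>Ec a m N j\<bar> * (ln (x + 1) ^ j * x powr (-(a + real N)))"
      using l0 l1 p1 by (intro mult_left_mono mult_mono power_mono) auto
    finally show "\<bar>Ec a m N j * (ln \<xi> ^ j * \<xi> powr (-(a + real N)))\<bar> \<le> \<bar>Ec a m N j\<bar> * (ln (x + 1) ^ j * x powr (-(a + real N)))" .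
  qed
  finally show ?thesis .
qed

lemma R4:
  assumes "p < (b::real)"
  shows "(\<lambda>n::nat. ln (real n + 1) ^ j * real n powr (-b)) \<in> O(\<lambda>n. (ln (real n) / real n) powr p)"
  using assms by real_asymp

lemma factB:
  assumes a: "a \<ge> 0" and aN: "a + real N > p" and N: "N > 0"
  shows "negl p (\<lambda>n. of_real (Ff a m (Suc n) - Ff a m n
            - (\<Sum>i\<in>{1..<N}. \<Sum>j\<le>m. Ec a m i j / fact i * Ff (a + real i) j n)))"
proof -
  define K where "K n = (\<Sum>j\<le>m. \<bar>Ec a m N j\<bar> / fact N * (ln (real n + 1) ^ j * real n powr (-(a + real N))))" for n :: nat
  define f where "f n = Ff a m (Suc n) - Ff a m n - (\<Sum>i\<in>{1..<N}. \<Sum>j\<le>m. Ec a m i j / fact i * Ff (a + real i) j n)" for n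
  have KO: "K \<in> O(\<lambda>n. (ln (real n) / real n) powr p)"
    unfolding K_def
  proof (intro big_sum_in_bigo)
    fix j
    show "(\<lambda>n. \<bar>Ec a m N j\<bar> / fact N * (ln (real n + 1) ^ j * real n powr (-(a + real N)))) \<in> O(\<lambda>n. (ln (real n) / real n) powr p)"
    proof (cases "Ec a m N j = 0")
      case True then show ?thesis by simp
    next
      case False then show ?thesis using R4[OF aN] by simp
    qed
  qed
  have "eventually (\<lambda>n. norm (f n) \<le> 1 * norm (K n)) at_top"
    using eventually_ge_at_top[of 1]
  proof eventually_elim
    case (elim n)
    then have x: "real n \<ge> 1" by simp
    from taylor_step[OF x N, of a m] obtain \<xi> where \<xi>: "real n < \<xi>" "\<xi> < real n + 1"
      and eq: "phi a m 0 (real n + 1) - phi a m 0 (real n) = (\<Sum>i\<in>{1..<N}. phi a m i (real n) / fact i) + phi a m N \<xi> / fact N"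
      by blast
    have "f n = phi a m N \<xi> / fact N"
    proof -
      have "Ff a m (Suc n) = phi a m 0 (real n + 1)" unfolding phi0 Ff_def by (simp add: add.commute)
      moreover have "Ff a m n = phi a m 0 (real n)" unfolding phi0 Ff_def by simp
      moreover have "(\<Sum>i\<in>{1..<N}. \<Sum>j\<le>m. Ec a m i j / fact i * Ff (a + real i) j n)
          = (\<Sum>i\<in>{1..<N}. phi a m i (real n) / fact i)"
        unfolding phi_Ff by (simp add: sum_divide_distrib)
      ultimately show ?thesis unfolding f_def using eq by simp
    qed
    then have "norm (f n) = \<bar>phi a m N \<xi>\<bar> / fact N" by simp
    also have "\<dots> \<le> (\<Sum>j\<le>m. \<bar>Ec a m N j\<bar> * (ln (real n + 1) ^ j * real n powr (-(a + real N)))) / fact N"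
      using phi_bound[of "real n" \<xi> a N m] x \<xi> a by (intro divide_right_mono) auto
    also have "\<dots> = K n" unfolding K_def by (simp add: sum_divide_distrib)
    also have "\<dots> \<le> 1 * norm (K n)" by simp
    finally show ?case .
  qed
  then have "f \<in> O(K)" by (rule bigoI)
  from landau_o.big_trans[OF this KO] have "f \<in> O(\<lambda>n. (ln (real n) / real n) powr p)" .
  from negl_real_bigo[OF this] show ?thesis unfolding f_def .
qed


lemma irr:
  assumes r: "\<rho> \<notin> \<rat>" and e: "real k' * \<rho> + real l' + 1 + real i = real k * \<rho> + real l + 1"
  shows "k' = k \<and> l' + i = l"
proof -
  have "k' = k"
  proof (rule ccontr)
    assume ne: "k' \<noteq> k"
    then have d: "real k' - real k \<noteq> 0" by simp
    from e have "(real k' - real k) * \<rho> = real l - real l' - real i" by (simp add: algebra_simps)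
    then have "\<rho> = (real l - real l' - real i) / (real k' - real k)" using d by (simp add: field_simps)
    also have "\<dots> \<in> \<rat>" by (intro Rats_divide Rats_diff) auto
    finally show False using r by simp
  qed
  with e have "real l' + real i = real l" by simp
  then have "l' + i = l" by linarith
  with \<open>k' = k\<close> show ?thesis by simp
qed

lemma zext_cmult:
  fixes c :: "'a::comm_ring_1"
  shows "zext (\<lambda>y. c * g y) A = c * zext g A"
  unfolding zext_def by simp

lemma zext_add:
  fixes g :: "_ \<Rightarrow> 'a::comm_ring_1"
  shows "zext (\<lambda>y. g y + h y) A = zext g A + zext h A"
  unfolding zext_def by simp

lemma negl_zext:
  assumes "\<And>y. negl p (R y)"
  shows "negl p (\<lambda>n. zext (\<lambda>y. R y n) A)"
proof (cases "fst A \<ge> 0 \<and> snd A \<ge> 0")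
  case True
  then show ?thesis unfolding zext_def using assms by simp
next
  case False
  then have "(\<lambda>n. zext (\<lambda>y. R y n) A) = (\<lambda>n. 0)" unfolding zext_def by auto
  then show ?thesis using negl_zero by simp
qed

lemma key:
  fixes S :: "(int \<times> int) set" and \<omega> :: "int \<times> int \<Rightarrow> real"
    and tc \<rho> :: real
    and q :: "nat \<times> nat \<Rightarrow> nat \<Rightarrow> complex"
    and v :: "nat \<Rightarrow> nat \<Rightarrow> nat \<Rightarrow> nat \<times> nat \<Rightarrow> complex"
  assumes S_fin: "finite S"
    and tc_pos: "tc > 0"
    and \<rho>_pos: "\<rho> > 0"
    and \<rho>_irr: "\<rho> \<notin> \<rat>"
    and rec: "\<And>x n. q x (Suc n) =
        (\<Sum>s\<in>S. complex_of_real (\<omega> s) * zext (\<lambda>y. q y n) (int (fst x) - fst s, int (snd x) - snd s))"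
    and asym: "\<And>p x. p > 0 \<Longrightarrow>
        (\<lambda>n. norm (q x n - complex_of_real (tc powr (- real n)) *
            (\<Sum>(k, l, m) \<in> {(k, l, m). 1 \<le> k \<and> m \<le> l \<and> real k * \<rho> + real l + 1 < p}.
               v k l m x * complex_of_real (ln (real n) ^ m / real n powr (real k * \<rho> + real l + 1)))))
        \<in> O(\<lambda>n. tc powr (- real n) * (ln (real n) / real n) powr p)"
    and k: "1 \<le> k" and ml: "m \<le> l"
  shows "\<exists>(U::((nat \<times> nat \<times> nat) \<times> nat \<times> nat) set) c L M. finite U \<and> (\<forall>u\<in>U. M u \<le> L u \<and> L u - M u < l - m)
      \<and> Delta S \<omega> tc (v k l m) = (\<lambda>x. \<Sum>u\<in>U. c u * v k (L u) (M u) x)"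
proof -
  define ae where "ae = (\<lambda>t::nat \<times> nat \<times> nat. real (fst t) * \<rho> + real (fst (snd t)) + 1)"
  define mt where "mt = (\<lambda>t::nat \<times> nat \<times> nat. snd (snd t))"
  define v3 where "v3 = (\<lambda>t::nat \<times> nat \<times> nat. v (fst t) (fst (snd t)) (snd (snd t)))"
  define a0 where "a0 = real k * \<rho> + real l + 1"
  define p where "p = a0 + 1"
  define N where "N = nat \<lceil>p\<rceil> + 1"
  define I where "I = {(k, l, m). 1 \<le> k \<and> m \<le> l \<and> real k * \<rho> + real l + 1 < p}"
  have a0pos: "a0 > 0" unfolding a0_def using \<rho>_pos by (smt (verit) mult_nonneg_nonneg of_nat_0_le_iff)
  have p0: "p > 0" unfolding p_def using a0pos by simp
  have Np: "real N > p" unfolding N_def by linarith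
  have N0: "N > 0" unfolding N_def by simp
  have finI: "finite I"
  proof (rule finite_subset)
    show "I \<subseteq> {..nat \<lceil>p / \<rho>\<rceil>} \<times> {..nat \<lceil>p\<rceil>} \<times> {..nat \<lceil>p\<rceil>}"
    proof
      fix t assume "t \<in> I"
      then obtain k' l' m' where t: "t = (k', l', m')" and h: "m' \<le> l'" "real k' * \<rho> + real l' + 1 < p"
        unfolding I_def by auto
      have "real k' * \<rho> < p" using h by simp
      then have "real k' < p / \<rho>" using \<rho>_pos by (simp add: field_simps)
      then have 1: "k' \<le> nat \<lceil>p / \<rho>\<rceil>" by linarith
      have "real l' < p" using h \<rho>_pos by (smt (verit) mult_nonneg_nonneg of_nat_0_le_iff)
      then have 2: "l' \<le> nat \<lceil>p\<rceil>" by linarith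
      with h have 3: "m' \<le> nat \<lceil>p\<rceil>" by simp
      show "t \<in> {..nat \<lceil>p / \<rho>\<rceil>} \<times> {..nat \<lceil>p\<rceil>} \<times> {..nat \<lceil>p\<rceil>}" using 1 2 3 t by simp
    qed
  qed simp
  have at_pos: "ae t > 0" for t unfolding ae_def using mult_nonneg_nonneg[of "real (fst t)" \<rho>] \<rho>_pos by linarith
  have sum_eq: "(\<Sum>(k, l, m) \<in> I. v k l m x * complex_of_real (ln (real n) ^ m / real n powr (real k * \<rho> + real l + 1)))
      = (\<Sum>t\<in>I. v3 t x * of_real (Ff (ae t) (mt t) n))" for x n
    by (simp add: split_def v3_def ae_def mt_def Ff_def)
  define Sx where "Sx x n = (\<Sum>t\<in>I. v3 t x * of_real (Ff (ae t) (mt t) n))" for x n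
  define Q where "Q x n = of_real (tc powr real n) * q x n" for x n
  define R where "R x n = Q x n - Sx x n" for x n
  have negR: "negl p (R x)" for x
  proof -
    from asym[OF p0, of x] have "(\<lambda>n. norm (q x n - of_real (tc powr (- real n)) * Sx x n))
        \<in> O(\<lambda>n. tc powr (- real n) * (ln (real n) / real n) powr p)"
      unfolding I_def[symmetric] sum_eq Sx_def .
    then obtain c where c: "eventually (\<lambda>n. norm (norm (q x n - of_real (tc powr (- real n)) * Sx x n))
        \<le> c * norm (tc powr (- real n) * (ln (real n) / real n) powr p)) at_top"
      by (elim landau_o.bigE) auto
    have "eventually (\<lambda>n. norm (R x n) \<le> c * Gf p n) at_top"
      using c
    proof eventually_elim
      case (elim n)
      have tp: "tc powr real n > 0" using tc_pos by simp
      have inv: "tc powr (- real n) = inverse (tc powr real n)" by (rule powr_minus)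
      have "R x n = of_real (tc powr real n) * (q x n - of_real (tc powr (- real n)) * Sx x n)"
      proof -
        have one: "complex_of_real (tc powr real n) * complex_of_real (inverse (tc powr real n)) = 1"
          using tp by simp
        have one': "complex_of_real (tc powr real n) * inverse (complex_of_real (tc powr real n)) = 1"
          using tp by simp
        show ?thesis unfolding R_def Q_def inv
          by (simp add: right_diff_distrib mult.assoc[symmetric] one one')
      qed
      then have "norm (R x n) = tc powr real n * norm (q x n - of_real (tc powr (- real n)) * Sx x n)"
        using tp by (simp add: norm_mult)
      also have "\<dots> \<le> tc powr real n * (c * (tc powr (- real n) * Gf p n))"
        using elim tp Gf_nonneg[of p n] unfolding Gf_def by (intro mult_left_mono) (auto simp: abs_mult)
      also have "\<dots> = c * Gf p n" unfolding inv using tp by simp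
      finally show ?case .
    qed
    then show ?thesis unfolding negl_def by blast
  qed
  have stepA: "negl p (\<lambda>n. Sx x (Suc n) - Sx x n - of_real tc * (\<Sum>t\<in>I. of_real (Ff (ae t) (mt t) n) * Delta S \<omega> tc (v3 t) x))" for x
  proof -
    define zs where "zs n = (\<Sum>s\<in>S. complex_of_real (\<omega> s) * zext (\<lambda>y. R y n) (int (fst x) - fst s, int (snd x) - snd s))" for n
    have neg1: "negl p (\<lambda>n. of_real tc * zs n - R x (Suc n))"
      unfolding zs_def
      by (intro negl_diff negl_cmult negl_sum S_fin negl_zext negR negl_Suc[OF p0])
    have DS: "Delta S \<omega> tc (\<lambda>y. Sx y n) = (\<lambda>A. \<Sum>t\<in>I. of_real (Ff (ae t) (mt t) n) * Delta S \<omega> tc (v3 t) A)" for n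
    proof -
      have "(\<lambda>y. Sx y n) = (\<lambda>y. \<Sum>t\<in>I. of_real (Ff (ae t) (mt t) n) * v3 t y)"
        unfolding Sx_def by (simp add: mult.commute)
      then show ?thesis by (simp add: Delta_lin)
    qed
    have eq: "Sx x (Suc n) - Sx x n - of_real tc * (\<Sum>t\<in>I. of_real (Ff (ae t) (mt t) n) * Delta S \<omega> tc (v3 t) x)
        = of_real tc * zs n - R x (Suc n)" for n
    proof -
      have tp: "tc powr real (Suc n) = tc * tc powr real n" using tc_pos by (simp add: powr_add add.commute)
      have "Q x (Suc n) = of_real tc * (\<Sum>s\<in>S. complex_of_real (\<omega> s) * zext (\<lambda>y. Q y n) (int (fst x) - fst s, int (snd x) - snd s))"
        unfolding Q_def rec tp zext_cmult by (simp add: sum_distrib_left mult_ac)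
      also have "(\<lambda>y. Q y n) = (\<lambda>y. Sx y n + R y n)" unfolding R_def by simp
      also have "(\<Sum>s\<in>S. complex_of_real (\<omega> s) * zext (\<lambda>y. Sx y n + R y n) (int (fst x) - fst s, int (snd x) - snd s))
          = (\<Sum>s\<in>S. complex_of_real (\<omega> s) * zext (\<lambda>y. Sx y n) (int (fst x) - fst s, int (snd x) - snd s)) + zs n"
        unfolding zext_add zs_def by (simp add: algebra_simps sum.distrib)
      also have "(\<Sum>s\<in>S. complex_of_real (\<omega> s) * zext (\<lambda>y. Sx y n) (int (fst x) - fst s, int (snd x) - snd s))
          = Delta S \<omega> tc (\<lambda>y. Sx y n) x + of_real (1 / tc) * Sx x n"
        unfolding Delta_def by simp
      finally have "Q x (Suc n) = of_real tc * (Delta S \<omega> tc (\<lambda>y. Sx y n) x + of_real (1 / tc) * Sx x n + zs n)" .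
      also have "\<dots> = of_real tc * Delta S \<omega> tc (\<lambda>y. Sx y n) x + Sx x n + of_real tc * zs n"
      proof -
        have tc1: "complex_of_real tc * complex_of_real (1 / tc) = 1"
          using tc_pos by (simp flip: of_real_mult)
        show ?thesis using tc_pos by (simp add: algebra_simps tc1 mult.assoc[symmetric])
      qed
      finally have "Q x (Suc n) = of_real tc * Delta S \<omega> tc (\<lambda>y. Sx y n) x + Sx x n + of_real tc * zs n" .
      moreover have "Q x (Suc n) = Sx x (Suc n) + R x (Suc n)" unfolding R_def by simp
      ultimately show ?thesis unfolding DS by (simp add: algebra_simps)
    qed
    show ?thesis using neg1 unfolding eq .
  qed
  define e where "e t i j = Ec (ae t) (mt t) i j / fact i" for t i j
  define B where "B = (SIGMA t:I. {1..<N} \<times> {..mt t})"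
  have finB: "finite B" unfolding B_def using finI by (intro finite_SigmaI) auto
  have aux1: "0 \<le> ae t" for t using at_pos[of t] by simp
  have aux2: "p < ae t + real N" for t using at_pos[of t] Np by linarith
  have stepB: "negl p (\<lambda>n. \<Sum>t\<in>I. v3 t x * of_real (Ff (ae t) (mt t) (Suc n) - Ff (ae t) (mt t) n
      - (\<Sum>i\<in>{1..<N}. \<Sum>j\<le>mt t. e t i j * Ff (ae t + real i) j n)))" for x
    unfolding e_def by (intro negl_sum finI negl_cmult factB N0 aux1 aux2)
  have sig: "(\<Sum>t\<in>I. v3 t x * of_real (\<Sum>i\<in>{1..<N}. \<Sum>j\<le>mt t. e t i j * Ff (ae t + real i) j n))
     = (\<Sum>u\<in>B. (v3 (fst u) x * of_real (e (fst u) (fst (snd u)) (snd (snd u))))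
             * of_real (Ff (ae (fst u) + real (fst (snd u))) (snd (snd u)) n))" for x n
  proof -
    have "(\<Sum>t\<in>I. v3 t x * of_real (\<Sum>i\<in>{1..<N}. \<Sum>j\<le>mt t. e t i j * Ff (ae t + real i) j n))
      = (\<Sum>t\<in>I. \<Sum>ij\<in>{1..<N} \<times> {..mt t}. v3 t x * of_real (e t (fst ij) (snd ij)) * of_real (Ff (ae t + real (fst ij)) (snd ij) n))"
      by (intro sum.cong refl) (simp add: sum_distrib_left sum.cartesian_product split_def mult.assoc)
    also have "\<dots> = (\<Sum>u\<in>B. (v3 (fst u) x * of_real (e (fst u) (fst (snd u)) (snd (snd u))))
             * of_real (Ff (ae (fst u) + real (fst (snd u))) (snd (snd u)) n))"
      unfolding B_def by (subst sum.Sigma[OF finI]) (auto simp: split_def)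
    finally show ?thesis .
  qed
  have comb: "negl p (\<lambda>n. (\<Sum>t\<in>I. (-(of_real tc * Delta S \<omega> tc (v3 t) x)) * of_real (Ff (ae t) (mt t) n))
      + (\<Sum>u\<in>B. (v3 (fst u) x * of_real (e (fst u) (fst (snd u)) (snd (snd u))))
             * of_real (Ff (ae (fst u) + real (fst (snd u))) (snd (snd u)) n)))" for x
  proof -
    have h1: "(\<Sum>t\<in>I. v3 t x * of_real (Ff (ae t) (mt t) (Suc n) - Ff (ae t) (mt t) n
      - (\<Sum>i\<in>{1..<N}. \<Sum>j\<le>mt t. e t i j * Ff (ae t + real i) j n)))
      = Sx x (Suc n) - Sx x n - (\<Sum>t\<in>I. v3 t x * of_real (\<Sum>i\<in>{1..<N}. \<Sum>j\<le>mt t. e t i j * Ff (ae t + real i) j n))" for n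
      unfolding Sx_def by (simp only: of_real_diff right_diff_distrib sum_subtractf)
    have h2: "of_real tc * (\<Sum>t\<in>I. of_real (Ff (ae t) (mt t) n) * Delta S \<omega> tc (v3 t) x)
       = - (\<Sum>t\<in>I. (-(of_real tc * Delta S \<omega> tc (v3 t) x)) * of_real (Ff (ae t) (mt t) n))" for n
      by (simp add: sum_distrib_left sum_negf mult_ac)
    have "negl p (\<lambda>n. (Sx x (Suc n) - Sx x n - of_real tc * (\<Sum>t\<in>I. of_real (Ff (ae t) (mt t) n) * Delta S \<omega> tc (v3 t) x))
        - (\<Sum>t\<in>I. v3 t x * of_real (Ff (ae t) (mt t) (Suc n) - Ff (ae t) (mt t) n
      - (\<Sum>i\<in>{1..<N}. \<Sum>j\<le>mt t. e t i j * Ff (ae t + real i) j n))))"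
      by (rule negl_diff[OF stepA stepB])
    then show ?thesis unfolding h1 h2 sig by (simp add: algebra_simps)
  qed
  have u: "(\<Sum>t\<in>{t\<in>I. ae t = a0 \<and> mt t = m}. -(of_real tc * Delta S \<omega> tc (v3 t) x))
    + (\<Sum>u\<in>{u\<in>B. ae (fst u) + real (fst (snd u)) = a0 \<and> snd (snd u) = m}.
         v3 (fst u) x * of_real (e (fst u) (fst (snd u)) (snd (snd u)))) = 0" for x
    by (rule uniq2[OF finI finB comb[of x]]) (simp add: p_def)
  have Ieq: "{t\<in>I. ae t = a0 \<and> mt t = m} = {(k, l, m)}"
  proof (intro equalityI subsetI)
    fix t assume t: "t \<in> {t\<in>I. ae t = a0 \<and> mt t = m}"
    obtain k' l' m' where tt: "t = (k', l', m')" by (cases t) auto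
    from t tt have e1: "real k' * \<rho> + real l' + 1 + real (0::nat) = real k * \<rho> + real l + 1" and "m' = m"
      by (auto simp: ae_def a0_def mt_def)
    from irr[OF \<rho>_irr e1] show "t \<in> {(k, l, m)}" using tt \<open>m' = m\<close> by simp
  next
    fix t assume "t \<in> {(k, l, m)}"
    then show "t \<in> {t\<in>I. ae t = a0 \<and> mt t = m}" using k ml by (simp add: I_def ae_def a0_def mt_def p_def)
  qed
  define B0 where "B0 = {u\<in>B. ae (fst u) + real (fst (snd u)) = a0 \<and> snd (snd u) = m}"
  have B0props: "fst (fst u) = k \<and> fst (snd (fst u)) < l \<and> m \<le> snd (snd (fst u)) \<and> snd (snd (fst u)) \<le> fst (snd (fst u))"
    if u: "u \<in> B0" for u
  proof -
    obtain k' l' m' i j where uu: "u = ((k', l', m'), (i, j))" by (cases u) auto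
    from u uu have mem: "(k', l', m') \<in> I" "i \<in> {1..<N}" "j \<le> m'"
      "real k' * \<rho> + real l' + 1 + real i = real k * \<rho> + real l + 1" "j = m"
      unfolding B0_def B_def by (auto simp: ae_def a0_def mt_def)
    from irr[OF \<rho>_irr mem(4)] have "k' = k" "l' + i = l" by auto
    with mem show ?thesis by (auto simp: uu I_def)
  qed
  have finB0: "finite B0" unfolding B0_def using finB by simp
  define cc where "cc u = of_real (e (fst u) (fst (snd u)) (snd (snd u))) / (of_real tc :: complex)" for u
  have Deq: "Delta S \<omega> tc (v k l m) x = (\<Sum>u\<in>B0. cc u * v k (fst (snd (fst u))) (snd (snd (fst u))) x)" for x
  proof -
    have s1: "(\<Sum>u\<in>B0. v3 (fst u) x * of_real (e (fst u) (fst (snd u)) (snd (snd u))))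
      = (\<Sum>u\<in>B0. v k (fst (snd (fst u))) (snd (snd (fst u))) x * of_real (e (fst u) (fst (snd u)) (snd (snd u))))"
      by (intro sum.cong refl) (simp add: v3_def B0props)
    from u[of x] have "-(of_real tc * Delta S \<omega> tc (v k l m) x) + (\<Sum>u\<in>B0. v3 (fst u) x * of_real (e (fst u) (fst (snd u)) (snd (snd u)))) = 0"
      unfolding Ieq B0_def[symmetric] by (simp add: v3_def)
    then have "of_real tc * Delta S \<omega> tc (v k l m) x = (\<Sum>u\<in>B0. v k (fst (snd (fst u))) (snd (snd (fst u))) x * of_real (e (fst u) (fst (snd u)) (snd (snd u))))"
      unfolding s1 by (simp add: algebra_simps)
    then have "Delta S \<omega> tc (v k l m) x = (\<Sum>u\<in>B0. v k (fst (snd (fst u))) (snd (snd (fst u))) x * of_real (e (fst u) (fst (snd u)) (snd (snd u)))) / of_real tc"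
      using tc_pos by (simp add: field_simps)
    also have "\<dots> = (\<Sum>u\<in>B0. cc u * v k (fst (snd (fst u))) (snd (snd (fst u))) x)"
      unfolding cc_def by (simp add: sum_divide_distrib mult_ac)
    finally show ?thesis .
  qed
  have props: "\<forall>u\<in>B0. snd (snd (fst u)) \<le> fst (snd (fst u)) \<and> fst (snd (fst u)) - snd (snd (fst u)) < l - m"
  proof
    fix u assume "u \<in> B0"
    from B0props[OF this] show "snd (snd (fst u)) \<le> fst (snd (fst u)) \<and> fst (snd (fst u)) - snd (snd (fst u)) < l - m"
      by arith
  qed
  show ?thesis
    by (rule exI[of _ B0], rule exI[of _ cc], rule exI[of _ "\<lambda>u. fst (snd (fst u))"],
        rule exI[of _ "\<lambda>u. snd (snd (fst u))"]) (use finB0 props Deq in auto)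
qed

theorem lemma4p5:
  fixes S :: "(int \<times> int) set" and \<omega> :: "int \<times> int \<Rightarrow> real"
    and tc \<rho> :: real
    and q :: "nat \<times> nat \<Rightarrow> nat \<Rightarrow> complex"
    and v :: "nat \<Rightarrow> nat \<Rightarrow> nat \<Rightarrow> nat \<times> nat \<Rightarrow> complex"
  assumes S_fin: "finite S"
    and \<omega>_pos: "\<And>s. s \<in> S \<Longrightarrow> \<omega> s > 0"
    and tc_pos: "tc > 0"
    and \<rho>_pos: "\<rho> > 0"
    and \<rho>_irr: "\<rho> \<notin> \<rat>"
    and rec: "\<And>x n. q x (Suc n) =
        (\<Sum>s\<in>S. complex_of_real (\<omega> s) * zext (\<lambda>y. q y n) (int (fst x) - fst s, int (snd x) - snd s))"
    and asym: "\<And>p x. p > 0 \<Longrightarrow>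
        (\<lambda>n. norm (q x n - complex_of_real (tc powr (- real n)) *
            (\<Sum>(k, l, m) \<in> {(k, l, m). 1 \<le> k \<and> m \<le> l \<and> real k * \<rho> + real l + 1 < p}.
               v k l m x * complex_of_real (ln (real n) ^ m / real n powr (real k * \<rho> + real l + 1)))))
        \<in> O(\<lambda>n. tc powr (- real n) * (ln (real n) / real n) powr p)"
  shows "\<forall>k l m. 1 \<le> k \<longrightarrow> m \<le> l \<longrightarrow>
           ((Delta S \<omega> tc) ^^ (l - m + 1)) (v k l m) = (\<lambda>_. 0)"
proof (intro allI impI)
  fix k l m :: nat
  assume k: "1 \<le> k" and ml: "m \<le> l"
  show "((Delta S \<omega> tc) ^^ (l - m + 1)) (v k l m) = (\<lambda>_. 0)"
  proof (rule iterate_Delta[where v="v k" and S=S and \<omega>=\<omega> and tc=tc, OF _ ml])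
    fix l' m' :: nat assume "m' \<le> l'"
    from key[OF S_fin tc_pos \<rho>_pos \<rho>_irr rec asym k this]
    show "\<exists>(U::((nat \<times> nat \<times> nat) \<times> nat \<times> nat) set) c L M. finite U \<and> (\<forall>u\<in>U. M u \<le> L u \<and> L u - M u < l' - m')
      \<and> Delta S \<omega> tc (v k l' m') = (\<lambda>x. \<Sum>u\<in>U. c u * v k (L u) (M u) x)" .
  qed
qed

end
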